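(* Let $P$ be a propositional normal logic program with countably many rules, and let $Z$ be its set of propositional atoms. Then, for every countable ordinal $\alpha<\Omega$, the immediate consequence operator $T_P:V^Z\to V^Z$ is $\alpha$-continuous with respect to the relations $\sqsubseteq_\alpha$ on $V^Z$.
   Context: Truth values. Let $\Omega$ be the first uncountable ordinal. $V$ consists of values $F_\alpha,T_\alpha$ ($\alpha<\Omega$) and $0$, totally ordered by $$F_0<F_1<\dots<F_\alpha<\dots<0<\dots<T_\alpha<\dots<T_1<T_0.$$ This is a complete lattice with supremum $\bigvee$. Order of a value: $order(F_\alpha)=order(T_\alpha)=\alpha$ and $order(0)=+\infty$. Relations on $V$, for $\alpha<\Omega$: $x\sqsubseteq_\alpha y$ iff either $x=y$, or both $order(x)\ge\alpha$ and $order(y)\ge\alpha$ and at least one of the following holds: both orders are $>\alpha$; $x=F_\alpha$; $y=T_\alpha$. Write $=_\alpha$ for the induced equivalence. The operation $\bigsqcup_\alpha$ on $V$, for $X\subseteq(x]_\alpha$ where $(x]_\alpha=\{y:\forall\beta<\alpha,\ x=_\beta y\}$: - if $order(x)<\alpha$, then $\bigsqcup_\alpha X=x$; - otherwise $\bigsqcup_\alpha X$ is $T_\alpha$ if $T_\alpha\in X$, is $F_\alpha$ if $X\subseteq\{F_\alpha\}$, and is $F_{\alpha+1}$ otherwise. Interpretations. $V^Z$ is the set of interpretations. On $V^Z$: $I\le J$ iff $I(z)\le J(z)$ for all $z$; $I\sqsubseteq_\alpha J$ iff $I(z)\sqsubseteq_\alpha J(z)$ for all $z\in Z$; $\bigsqcup_\alpha$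 and $\bigvee$ are computed pointwise. Programs. A rule has the form $p\leftarrow l_1,\dots,l_n$, where $p\in Z$ and each $l_i$ is either an atom $q$ or a negated atom $\sim q$ with $q\in Z$; alternatively the body is the constant true or false. An interpretation $I$ extends to bodies as follows: - $I(\sim q)=\sim(I(q))$, where $\sim F_\beta=T_{\beta+1}$, $\sim T_\beta=F_{\beta+1}$ and $\sim0=0$; - $I(l_1,\dots,l_n)=\min\{I(l_1),\dots,I(l_n)\}$; - $I(\mathrm{true})=T_0$ and $I(\mathrm{false})=F_0$. $T_P(I)(p)=\bigvee\{I(l_1,\dots,l_n):(p\leftarrow l_1,\dots,l_n)\in P\}$. $\alpha$-continuity. A function $f:V^Z\to V^Z$ is $\alpha$-monotonic if $I\sqsubseteq_\alpha J$ implies $f(I)\sqsubseteq_\alpha f(J)$. It is $\alpha$-continuous if it is $\alpha$-monotonic and, for every sequence $(I_n)_{n\ge0}$ with $I_n\sqsubseteq_\alpha I_{n+1}$, we have $f(\bigsqcup_\alpha\{I_n:n\ge0\})=_\alpha\bigsqcup_\alpha\{f(I_n):n\ge0\}$. *)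

theory Defs
  imports "HOL-Library.Countable_Set"
begin

text \<open>Countable ordinals (the ordinals below Omega) are modelled by a type variable
  'o :: wellorder, subject to the hypotheses of the theorem that 'o is uncountable
  and every proper initial segment is countable (this characterises omega_1).\<close>

datatype 'o tv = F 'o | Zero | T 'o

fun vle :: "'o::wellorder tv \<Rightarrow> 'o tv \<Rightarrow> bool" where
  "vle (F a) (F b) = (a \<le> b)"
| "vle (F a) Zero = True"
| "vle (F a) (T b) = True"
| "vle Zero (F b) = False"
| "vle Zero Zero = True"
| "vle Zero (T b) = True"
| "vle (T a) (F b) = False"
| "vle (T a) Zero = False"
| "vle (T a) (T b) = (b \<le> a)"

definition vSup :: "'o::wellorder tv set \<Rightarrow> 'o tv" where
  "vSup S = (THE x. (\<forall>y\<in>S. vle y x) \<and> (\<forall>z. (\<forall>y\<in>S. vle y z) \<longrightarrow> vle x z))"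

definition vmin :: "'o::wellorder tv \<Rightarrow> 'o tv \<Rightarrow> 'o tv" where
  "vmin x y = (if vle x y then x else y)"

text \<open>order(x) >= alpha and order(x) > alpha (order(0) = +infinity).\<close>
fun ord_ge :: "'o::wellorder tv \<Rightarrow> 'o \<Rightarrow> bool" where
  "ord_ge (F b) a = (a \<le> b)"
| "ord_ge Zero a = True"
| "ord_ge (T b) a = (a \<le> b)"

fun ord_gt :: "'o::wellorder tv \<Rightarrow> 'o \<Rightarrow> bool" where
  "ord_gt (F b) a = (a < b)"
| "ord_gt Zero a = True"
| "ord_gt (T b) a = (a < b)"

definition sqle :: "'o::wellorder \<Rightarrow> 'o tv \<Rightarrow> 'o tv \<Rightarrow> bool" where
  "sqle a x y = (x = y \<or> (ord_ge x a \<and> ord_ge y a \<and>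
       ((ord_gt x a \<and> ord_gt y a) \<or> x = F a \<or> y = T a)))"

definition sqeq :: "'o::wellorder \<Rightarrow> 'o tv \<Rightarrow> 'o tv \<Rightarrow> bool" where
  "sqeq a x y = (sqle a x y \<and> sqle a y x)"

definition ozero :: "'o::wellorder" where
  "ozero = (LEAST b. True)"

definition osuc :: "'o::wellorder \<Rightarrow> 'o" where
  "osuc a = (LEAST b. a < b)"

text \<open>The operation bigsqcup_alpha X, for X contained in (x]_alpha; x is an explicit parameter.\<close>
definition vlub :: "'o::wellorder \<Rightarrow> 'o tv \<Rightarrow> 'o tv set \<Rightarrow> 'o tv" where
  "vlub a x X = (if \<not> ord_ge x a then x
     else if T a \<in> X then T a
     else if X \<subseteq> {F a} then F a
     else F (osuc a))"

definition sqleI :: "'o::wellorder \<Rightarrow> ('z \<Rightarrow> 'o tv) \<Rightarrow> ('z \<Rightarrow> 'o tv) \<Rightarrow> bool" where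
  "sqleI a I J = (\<forall>z. sqle a (I z) (J z))"

definition sqeqI :: "'o::wellorder \<Rightarrow> ('z \<Rightarrow> 'o tv) \<Rightarrow> ('z \<Rightarrow> 'o tv) \<Rightarrow> bool" where
  "sqeqI a I J = (sqleI a I J \<and> sqleI a J I)"

definition vlubI :: "'o::wellorder \<Rightarrow> ('z \<Rightarrow> 'o tv) \<Rightarrow> ('z \<Rightarrow> 'o tv) set \<Rightarrow> ('z \<Rightarrow> 'o tv)" where
  "vlubI a J X = (\<lambda>z. vlub a (J z) ((\<lambda>I. I z) ` X))"

datatype 'z lit = Pos 'z | Neg 'z
datatype 'z body = Lits "'z lit list" | BTrue | BFalse
type_synonym 'z rule = "'z \<times> 'z body"

fun vneg :: "'o::wellorder tv \<Rightarrow> 'o tv" where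
  "vneg (F b) = T (osuc b)"
| "vneg (T b) = F (osuc b)"
| "vneg Zero = Zero"

fun eval_lit :: "('z \<Rightarrow> 'o::wellorder tv) \<Rightarrow> 'z lit \<Rightarrow> 'o tv" where
  "eval_lit I (Pos q) = I q"
| "eval_lit I (Neg q) = vneg (I q)"

fun eval_body :: "('z \<Rightarrow> 'o::wellorder tv) \<Rightarrow> 'z body \<Rightarrow> 'o tv" where
  "eval_body I (Lits ls) = foldr (\<lambda>l acc. vmin (eval_lit I l) acc) ls (T ozero)"
| "eval_body I BTrue = T ozero"
| "eval_body I BFalse = F ozero"

definition TP :: "'z rule set \<Rightarrow> ('z \<Rightarrow> 'o::wellorder tv) \<Rightarrow> ('z \<Rightarrow> 'o tv)" where
  "TP P I = (\<lambda>p. vSup {eval_body I b | b. (p, b) \<in> P})"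

definition alpha_monotonic :: "'o::wellorder \<Rightarrow> (('z \<Rightarrow> 'o tv) \<Rightarrow> ('z \<Rightarrow> 'o tv)) \<Rightarrow> bool" where
  "alpha_monotonic a f = (\<forall>I J. sqleI a I J \<longrightarrow> sqleI a (f I) (f J))"

text \<open>For the chain (I n), the reference point x of bigsqcup_alpha is taken to be I 0
  (resp. f (I 0)), which lies in the same class (x]_alpha as the whole chain.\<close>
definition alpha_continuous :: "'o::wellorder \<Rightarrow> (('z \<Rightarrow> 'o tv) \<Rightarrow> ('z \<Rightarrow> 'o tv)) \<Rightarrow> bool" where
  "alpha_continuous a f = (alpha_monotonic a f \<and>
     (\<forall>Is :: nat \<Rightarrow> ('z \<Rightarrow> 'o tv). (\<forall>n. sqleI a (Is n) (Is (Suc n))) \<longrightarrow>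
        sqeqI a (f (vlubI a (Is 0) (range Is))) (vlubI a (f (Is 0)) (range (\<lambda>n. f (Is n))))))"

end

theory Submission
  imports Defs
begin

lemma vle_refl: "vle x x" by (cases x) auto
lemma vle_antisym: "vle x y \<Longrightarrow> vle y x \<Longrightarrow> x = y" by (cases x; cases y) auto
lemma vle_trans: "vle x y \<Longrightarrow> vle y z \<Longrightarrow> vle x z" by (cases x; cases y; cases z) auto
lemma vle_total: "vle x y \<or> vle y x" by (cases x; cases y) auto
lemma ord_ge_iff: "ord_ge x a \<longleftrightarrow> vle (F a) x \<and> vle x (T a)" by (cases x) auto
lemma ord_gt_iff: "ord_gt x a \<longleftrightarrow> ord_ge x a \<and> x \<noteq> F a \<and> x \<noteq> T a" by (cases x) auto
lemma sqle_refl: "sqle a x x" by (simp add: sqle_def)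
lemma sqle_Ta: "sqle a (T a) y \<Longrightarrow> y = T a" by (cases y) (auto simp: sqle_def)
lemma sqle_Fa: "sqle a x (F a) \<Longrightarrow> x = F a" by (cases x) (auto simp: sqle_def)
lemma sqle_small1: "\<not> ord_ge x a \<Longrightarrow> sqle a x y \<Longrightarrow> y = x" by (auto simp: sqle_def)
lemma sqle_small2: "\<not> ord_ge y a \<Longrightarrow> sqle a x y \<Longrightarrow> x = y" by (auto simp: sqle_def)
lemma sqle_reg1: "ord_ge x a \<Longrightarrow> sqle a x y \<Longrightarrow> ord_ge y a" by (auto simp: sqle_def)
lemma sqle_reg2: "ord_ge y a \<Longrightarrow> sqle a x y \<Longrightarrow> ord_ge x a" by (auto simp: sqle_def)

lemma sqle_trans: "sqle a x y \<Longrightarrow> sqle a y z \<Longrightarrow> sqle a x z"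
  unfolding sqle_def ord_gt_iff by auto
lemma vmin_comm: "vmin x y = vmin y x"
  unfolding vmin_def using vle_antisym vle_total by metis
lemma vmin_mono1: "sqle a x x' \<Longrightarrow> sqle a (vmin x y) (vmin x' y)"
  by (cases x; cases x'; cases y) (auto simp: sqle_def vmin_def)
lemma vmin_mono: "sqle a x x' \<Longrightarrow> sqle a y y' \<Longrightarrow> sqle a (vmin x y) (vmin x' y')"
  by (metis vmin_mono1 vmin_comm sqle_trans)

lemma vneg_gt: assumes "\<forall>b::'o::wellorder. b < osuc b" "ord_ge x (a::'o)" shows "ord_gt (vneg x) a"
  using assms by (cases x) (auto intro: order.strict_trans1)
lemma vneg_mono: assumes "\<forall>b::'o::wellorder. b < osuc b" "sqle (a::'o) x y" shows "sqle a (vneg x) (vneg y)"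
proof (cases "x = y")
  case False
  then have "ord_ge x a" "ord_ge y a" using assms(2) by (auto simp: sqle_def)
  then show ?thesis using vneg_gt[OF assms(1)] by (auto simp: sqle_def ord_gt_iff)
qed (simp add: sqle_refl)

definition lubc :: "'o::wellorder tv set \<Rightarrow> 'o tv" where
 "lubc S = (if \<exists>b. T b \<in> S then T (LEAST b. T b \<in> S) else if Zero \<in> S then Zero
   else if \<exists>c. \<forall>b. F b \<in> S \<longrightarrow> b \<le> c then F (LEAST c. \<forall>b. F b \<in> S \<longrightarrow> b \<le> c) else Zero)"

lemma lubc_upper: "y \<in> S \<Longrightarrow> vle y (lubc S)"
proof -
  assume y: "y \<in> S"
  show ?thesis
  proof (cases "\<exists>b. T b \<in> S")
    case True
    then show ?thesis using y by (cases y) (auto simp: lubc_def intro: Least_le)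
  next
    case nT: False
    show ?thesis
    proof (cases "Zero \<in> S")
      case True then show ?thesis using y nT by (cases y) (auto simp: lubc_def)
    next
      case nZ: False
      show ?thesis
      proof (cases "\<exists>c. \<forall>b. F b \<in> S \<longrightarrow> b \<le> c")
        case True
        then have "\<forall>b. F b \<in> S \<longrightarrow> b \<le> (LEAST c. \<forall>b. F b \<in> S \<longrightarrow> b \<le> c)" by (rule LeastI_ex)
        then show ?thesis using y nT nZ True by (cases y) (auto simp: lubc_def)
      next
        case False then show ?thesis using y nT nZ by (cases y) (auto simp: lubc_def)
      qed
    qed
  qed
qed

lemma lubc_least: "\<forall>y\<in>S. vle y z \<Longrightarrow> vle (lubc S) z"
proof -
  assume z: "\<forall>y\<in>S. vle y z"
  show ?thesis
  proof (cases "\<exists>b. T b \<in> S")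
    case True
    then have "T (LEAST b. T b \<in> S) \<in> S" by (rule LeastI_ex)
    then show ?thesis using z True by (auto simp: lubc_def)
  next
    case nT: False
    show ?thesis
    proof (cases "Zero \<in> S")
      case True then show ?thesis using z nT by (auto simp: lubc_def)
    next
      case nZ: False
      show ?thesis
      proof (cases "\<exists>c. \<forall>b. F b \<in> S \<longrightarrow> b \<le> c")
        case True
        show ?thesis
        proof (cases z)
          case (F d)
          then have "\<forall>b. F b \<in> S \<longrightarrow> b \<le> d" using z by auto
          then have "(LEAST c. \<forall>b. F b \<in> S \<longrightarrow> b \<le> c) \<le> d" by (rule Least_le)
          then show ?thesis using F nT nZ True by (auto simp: lubc_def)
        qed (use nT nZ True in \<open>auto simp: lubc_def\<close>)
      next
        case False
        show ?thesis
        proof (cases z)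
          case (F d)
          then have "\<forall>b. F b \<in> S \<longrightarrow> b \<le> d" using z by auto
          then show ?thesis using False by blast
        qed (use nT nZ False in \<open>auto simp: lubc_def\<close>)
      qed
    qed
  qed
qed

lemma vSup_eq: "vSup S = lubc S"
  unfolding vSup_def
  by (rule the_equality) (auto intro: lubc_upper lubc_least vle_antisym)

lemma vSup_upper: "y \<in> S \<Longrightarrow> vle y (vSup S)" by (simp add: vSup_eq lubc_upper)
lemma vSup_least: "\<forall>y\<in>S. vle y z \<Longrightarrow> vle (vSup S) z" by (simp add: vSup_eq lubc_least)
lemma vSup_T: "vSup S = T c \<Longrightarrow> T c \<in> S"
  unfolding vSup_eq lubc_def by (auto split: if_splits intro: LeastI_ex)


lemma vle_Fc_small: "vle y (F c) \<Longrightarrow> c < a \<Longrightarrow> \<not> ord_ge y a"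
  by (cases y) auto

lemma vSup_mono:
  assumes h: "\<forall>r\<in>R. sqle a (f r) (g r)"
  shows "sqle a (vSup (f ` R)) (vSup (g ` R))"
proof -
  define s where "s = vSup (f ` R)"
  define t where "t = vSup (g ` R)"
  have sup_f: "\<And>r. r \<in> R \<Longrightarrow> vle (f r) s" unfolding s_def by (auto intro: vSup_upper)
  have sup_g: "\<And>r. r \<in> R \<Longrightarrow> vle (g r) t" unfolding t_def by (auto intro: vSup_upper)
  have eq_or: "\<And>r. r \<in> R \<Longrightarrow> f r = g r \<or> (ord_ge (f r) a \<and> ord_ge (g r) a)"
    using h by (auto simp: sqle_def)
  have same: "(\<forall>r\<in>R. f r = g r) \<Longrightarrow> sqle a s t"
    unfolding s_def t_def by (metis image_cong sqle_refl)
  have "sqle a s t"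
  proof (cases "ord_ge s a")
    case False
    show ?thesis
    proof (cases s)
      case (F c)
      with False have ca: "c < a" by auto
      have "\<forall>r\<in>R. f r = g r"
      proof
        fix r assume r: "r \<in> R"
        have "\<not> ord_ge (f r) a" using vle_Fc_small sup_f[OF r] F ca by blast
        then show "f r = g r" using sqle_small1 h r by metis
      qed
      then show ?thesis by (rule same)
    next
      case Zero with False show ?thesis by simp
    next
      case (T c)
      with False have ca: "c < a" by auto
      have "T c \<in> f ` R" using T vSup_T s_def by metis
      then obtain r where r: "r \<in> R" "f r = T c" by auto
      then have gr: "g r = T c" using sqle_small1[of "f r" a "g r"] h ca by auto
      have "vle (T c) t" using sup_g[OF r(1)] gr by simp
      moreover have "vle t (T c)" unfolding t_def
      proof (rule vSup_least, safe)
        fix r' assume r': "r' \<in> R"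
        show "vle (g r') (T c)"
        proof (cases "f r' = g r'")
          case True then show ?thesis using sup_f[OF r'] T by metis
        next
          case False
          then have "ord_ge (g r') a" using eq_or[OF r'] by auto
          then have "vle (g r') (T a)" by (simp add: ord_ge_iff)
          then show ?thesis using ca vle_trans[of "g r'" "T a" "T c"] by simp
        qed
      qed
      ultimately have "t = s" using T vle_antisym by metis
      then show ?thesis by (simp add: sqle_refl)
    qed
  next
    case sreg: True
    show ?thesis
    proof (cases "\<forall>r\<in>R. \<not> ord_ge (f r) a")
      case True
      then have "\<forall>r\<in>R. f r = g r" using sqle_small1 h by metis
      then show ?thesis by (rule same)
    next
      case False
      then obtain r0 where r0: "r0 \<in> R" "ord_ge (f r0) a" by auto
      then have "ord_ge (g r0) a" using sqle_reg1 h by blast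
      then have tF: "vle (F a) t" using sup_g[OF r0(1)] vle_trans ord_ge_iff by blast
      have tT: "vle t (T a)"
      proof (rule ccontr)
        assume nt: "\<not> vle t (T a)"
        then obtain c where tc: "t = T c" "c < a" using tF by (cases t) auto
        have "T c \<in> g ` R" using tc vSup_T t_def by metis
        then obtain r where r: "r \<in> R" "g r = T c" by auto
        then have "f r = T c" using sqle_small2[of "g r" a "f r"] h tc by auto
        then have "vle (T c) s" using sup_f[OF r(1)] by simp
        moreover have "vle s (T a)" using sreg ord_ge_iff by blast
        ultimately have "vle (T c) (T a)" by (rule vle_trans)
        then show False using tc by simp
      qed
      have treg: "ord_ge t a" using tF tT ord_ge_iff by blast
      have sT: "s = T a \<Longrightarrow> t = T a"
      proof -
        assume "s = T a"
        then have "T a \<in> f ` R" using vSup_T s_def by metis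
        then obtain r where r: "r \<in> R" "f r = T a" by auto
        then have "g r = T a" using sqle_Ta h by metis
        then have "vle (T a) t" using sup_g[OF r(1)] by simp
        then show "t = T a" using tT vle_antisym by blast
      qed
      have tFa: "t = F a \<Longrightarrow> s = F a"
      proof -
        assume ta: "t = F a"
        have "vle s (F a)" unfolding s_def
        proof (rule vSup_least, safe)
          fix r assume r: "r \<in> R"
          show "vle (f r) (F a)"
          proof (cases "f r = g r")
            case True then show ?thesis using sup_g[OF r] ta by metis
          next
            case False
            then have "ord_ge (g r) a" using eq_or[OF r] by auto
            then have "g r = F a" using sup_g[OF r] ta vle_antisym ord_ge_iff by metis
            then have "f r = F a" using sqle_Fa h r by metis
            then show ?thesis by (simp add: vle_refl)
          qed
        qed
        then show "s = F a" using sreg ord_ge_iff vle_antisym by blast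
      qed
      show ?thesis using sreg treg sT tFa unfolding sqle_def ord_gt_iff by auto
    qed
  qed
  then show ?thesis by (simp add: s_def t_def)
qed

fun latom :: "'z lit \<Rightarrow> 'z" where "latom (Pos q) = q" | "latom (Neg q) = q"
fun batoms :: "'z body \<Rightarrow> 'z set" where
  "batoms (Lits ls) = latom ` set ls" | "batoms BTrue = {}" | "batoms BFalse = {}"

lemma finite_batoms: "finite (batoms b)" by (cases b) auto

lemma eval_lit_mono: assumes "\<forall>b::'o::wellorder. b < osuc b" "sqle (a::'o) (I (latom l)) (J (latom l))"
  shows "sqle a (eval_lit I l) (eval_lit J l)"
  using assms by (cases l) (auto intro: vneg_mono)

lemma eval_mono: assumes "\<forall>b::'o::wellorder. b < osuc b" "\<forall>z\<in>batoms b. sqle (a::'o) (I z) (J z)"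
  shows "sqle a (eval_body I b) (eval_body J b)"
proof (cases b)
  case (Lits ls)
  have "\<forall>z\<in>latom ` set ls. sqle a (I z) (J z) \<Longrightarrow>
     sqle a (foldr (\<lambda>l acc. vmin (eval_lit I l) acc) ls (T ozero))
            (foldr (\<lambda>l acc. vmin (eval_lit J l) acc) ls (T ozero))"
  proof (induction ls)
    case Nil then show ?case by (simp add: sqle_refl)
  next
    case (Cons l ls)
    then have "sqle a (eval_lit I l) (eval_lit J l)" using eval_lit_mono[OF assms(1)] by auto
    then show ?case using Cons vmin_mono by auto
  qed
  then show ?thesis using assms(2) Lits by simp
qed (auto simp: sqle_refl)

lemma TP_mono: assumes "\<forall>b::'o::wellorder. b < osuc b" "sqleI (a::'o) I J"
  shows "sqle a (TP P I p) (TP P J p)"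
proof -
  have e: "\<And>K. {eval_body K b | b. (p, b) \<in> P} = (\<lambda>b. eval_body K b) ` {b. (p,b) \<in> P}" by auto
  show ?thesis unfolding TP_def e
    by (rule vSup_mono) (use assms(2) in \<open>auto simp: sqleI_def intro!: eval_mono[OF assms(1)]\<close>)
qed


lemma chain_le: assumes "\<forall>n. sqle a (c n) (c (Suc n))" "n \<le> m" shows "sqle a (c n) (c m)"
  using assms(2) by (induction m rule: dec_induct) (auto intro: sqle_trans sqle_refl assms(1)[rule_format])

lemma chain_small: assumes "\<forall>n. sqle a (c n) (c (Suc n))" "\<not> ord_ge (c 0) a" shows "c n = c 0"
  using chain_le[OF assms(1), of 0 n] sqle_small1 assms(2) by auto

lemma chain_ub: assumes "a < osuc a" "\<forall>n. sqle a (c n) (c (Suc n))"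
  shows "sqle a (c n) (vlub a (c 0) (range c))"
proof (cases "ord_ge (c 0) a")
  case False then show ?thesis using chain_small[OF assms(2) False, of n] by (simp add: vlub_def sqle_refl)
next
  case True
  then have reg: "ord_ge (c n) a" using chain_le[OF assms(2), of 0 n] sqle_reg1 by auto
  show ?thesis
  proof (cases "T a \<in> range c")
    case True then show ?thesis using reg \<open>ord_ge (c 0) a\<close> by (auto simp: vlub_def sqle_def)
  next
    case nT: False
    show ?thesis
    proof (cases "range c \<subseteq> {F a}")
      case True
      then have "c n = F a" by auto
      then show ?thesis using True nT \<open>ord_ge (c 0) a\<close> by (auto simp: vlub_def sqle_refl)
    next
      case False
      then have "vlub a (c 0) (range c) = F (osuc a)" using nT \<open>ord_ge (c 0) a\<close> by (simp add: vlub_def)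
      moreover have "c n \<noteq> T a" using nT by (metis rangeI)
      ultimately show ?thesis using reg assms(1) by (auto simp: sqle_def ord_gt_iff)
    qed
  qed
qed

lemma chain_stab: assumes "a < osuc a" "\<forall>n. sqle a (c n) (c (Suc n))"
  shows "\<exists>N. \<forall>m\<ge>N. sqle a (vlub a (c 0) (range c)) (c m)"
proof (cases "ord_ge (c 0) a")
  case False then show ?thesis using chain_small[OF assms(2) False] by (metis vlub_def sqle_refl)
next
  case reg0: True
  have reg: "\<And>n. ord_ge (c n) a" using chain_le[OF assms(2), of 0] sqle_reg1 reg0 by blast
  show ?thesis
  proof (cases "T a \<in> range c")
    case True
    then obtain N where N: "c N = T a" by auto
    have "\<forall>m\<ge>N. c m = T a" using chain_le[OF assms(2), of N] N sqle_Ta by metis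
    moreover have "vlub a (c 0) (range c) = T a" using True reg0 by (simp add: vlub_def)
    ultimately show ?thesis by (metis sqle_refl)
  next
    case nT: False
    show ?thesis
    proof (cases "range c \<subseteq> {F a}")
      case True
      then have "\<forall>m. c m = F a" by auto
      moreover have "vlub a (c 0) (range c) = F a" using True nT reg0 by (simp add: vlub_def)
      ultimately show ?thesis by (metis sqle_refl)
    next
      case False
      then obtain N where N: "c N \<noteq> F a" by auto
      have "\<forall>m\<ge>N. c m \<noteq> F a" using chain_le[OF assms(2), of N] N sqle_Fa by metis
      moreover have "vlub a (c 0) (range c) = F (osuc a)" using nT False reg0 by (simp add: vlub_def)
      ultimately show ?thesis using reg assms(1) nT by (auto simp: sqle_def ord_gt_iff)
    qed
  qed
qed

lemma stab_finite: fixes Q :: "'z \<Rightarrow> nat \<Rightarrow> bool" assumes "finite A" "\<forall>z\<in>A. \<exists>N. \<forall>m\<ge>N. Q z m"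
  shows "\<exists>N. \<forall>m\<ge>N. \<forall>z\<in>A. Q z m"
  using assms
proof (induction A rule: finite_induct)
  case empty then show ?case by auto
next
  case (insert x A)
  then obtain N1 where N1: "\<forall>m\<ge>N1. \<forall>z\<in>A. Q z m" by auto
  obtain N2 where N2: "\<forall>m\<ge>N2. Q x m" using insert by auto
  have "\<forall>m\<ge>max N1 N2. \<forall>z\<in>insert x A. Q z m"
  proof (intro allI impI ballI)
    fix m z assume m: "max N1 N2 \<le> m" and z: "z \<in> insert x A"
    then show "Q z m" using N1 N2 by (cases "z = x") auto
  qed
  then show ?case by blast
qed

lemma final_step:
  assumes os: "a < osuc a" and ch: "\<forall>n. sqle a (t n) (t (Suc n))"
    and ub: "\<forall>n. sqle a (t n) u"
    and iii: "u = T a \<Longrightarrow> \<exists>n. t n = T a"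
    and iv: "(\<forall>n. t n = F a) \<Longrightarrow> u = F a"
  shows "sqeq a u (vlub a (t 0) (range t))"
proof (cases "ord_ge (t 0) a")
  case False
  then have "u = t 0" using ub sqle_small1 by metis
  then show ?thesis using False by (simp add: vlub_def sqeq_def sqle_refl)
next
  case reg0: True
  have ureg: "ord_ge u a" using ub reg0 sqle_reg1 by blast
  show ?thesis
  proof (cases "u = T a")
    case True
    then have "T a \<in> range t" using iii by (metis rangeI)
    then show ?thesis using True reg0 by (simp add: vlub_def sqeq_def sqle_refl)
  next
    case nuT: False
    have nT: "T a \<notin> range t" using nuT ub sqle_Ta by (metis imageE)
    show ?thesis
    proof (cases "range t \<subseteq> {F a}")
      case True
      then have "u = F a" using iv by auto
      then show ?thesis using True nT reg0 by (simp add: vlub_def sqeq_def sqle_refl)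
    next
      case False
      then obtain n where n: "t n \<noteq> F a" by auto
      have "u \<noteq> F a" using n ub sqle_Fa by metis
      moreover have "vlub a (t 0) (range t) = F (osuc a)" using nT False reg0 by (simp add: vlub_def)
      ultimately show ?thesis using ureg nuT os by (auto simp: sqeq_def sqle_def ord_gt_iff)
    qed
  qed
qed


lemma TP_eq: "TP P I p = vSup ((\<lambda>b. eval_body I b) ` {b. (p,b) \<in> P})"
  unfolding TP_def by (rule arg_cong[where f=vSup]) auto

theorem mainTheorem19:
  fixes P :: "'z rule set" and a :: "'o::wellorder"
  assumes "\<not> countable (UNIV :: 'o set)"
    and "\<forall>b::'o. countable {c. c < b}"
    and "countable P"
  shows "alpha_continuous a (TP P :: ('z \<Rightarrow> 'o tv) \<Rightarrow> ('z \<Rightarrow> 'o tv))"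
proof -
  have nomax: "\<forall>b::'o. b < osuc b"
  proof
    fix b :: 'o
    have "\<exists>c. b < c"
    proof (rule ccontr)
      assume "\<not> (\<exists>c. b < c)"
      then have "UNIV \<subseteq> insert b {c. c < b}" by (auto simp: not_less_iff_gr_or_eq)
      moreover have "countable (insert b {c. c < b})" using assms(2) by simp
      ultimately have "countable (UNIV :: 'o set)" by (rule countable_subset)
      then show False using assms(1) by blast
    qed
    then show "b < osuc b" unfolding osuc_def by (rule LeastI_ex)
  qed
  have os: "a < osuc a" using nomax by blast
  have mono: "alpha_monotonic a (TP P :: ('z \<Rightarrow> 'o tv) \<Rightarrow> ('z \<Rightarrow> 'o tv))"
    unfolding alpha_monotonic_def using TP_mono[OF nomax] by (auto simp: sqleI_def)
  have cont: "sqeqI a (TP P (vlubI a (Is 0) (range Is))) (vlubI a (TP P (Is 0)) (range (\<lambda>n. TP P (Is n))))"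
    if chI: "\<forall>n. sqleI a (Is n) (Is (Suc n))" for Is :: "nat \<Rightarrow> ('z \<Rightarrow> 'o tv)"
  proof -
    define L where "L = vlubI a (Is 0) (range Is)"
    have Lz: "L z = vlub a (Is 0 z) (range (\<lambda>n. Is n z))" for z
      unfolding L_def vlubI_def by (simp add: image_image)
    have chz: "\<forall>n. sqle a (Is n z) (Is (Suc n) z)" for z using chI by (auto simp: sqleI_def)
    have ubI: "sqleI a (Is n) L" for n
      unfolding sqleI_def Lz using chain_ub[OF os chz] by blast
    have stz: "\<exists>N. \<forall>m\<ge>N. sqle a (L z) (Is m z)" for z
      unfolding Lz using chain_stab[OF os chz] by blast
    have stb: "\<exists>N. sqle a (eval_body L b) (eval_body (Is N) b)" for b
    proof -
      obtain N where N: "\<forall>m\<ge>N. \<forall>z\<in>batoms b. sqle a (L z) (Is m z)"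
        using stab_finite[OF finite_batoms, of b "\<lambda>z m. sqle a (L z) (Is m z)"] stz by blast
      show ?thesis using eval_mono[OF nomax, of b a L "Is N"] N by blast
    qed
    have main: "sqeq a (TP P L p) (vlub a (TP P (Is 0) p) (range (\<lambda>n. TP P (Is n) p)))" for p
    proof (rule final_step[OF os])
      show "\<forall>n. sqle a (TP P (Is n) p) (TP P (Is (Suc n)) p)"
        by (intro allI TP_mono[OF nomax]) (use chI in blast)
      show ub: "\<forall>n. sqle a (TP P (Is n) p) (TP P L p)"
        by (intro allI TP_mono[OF nomax] ubI)
      show "\<exists>n. TP P (Is n) p = T a" if u: "TP P L p = T a"
      proof -
        have "T a \<in> (\<lambda>b. eval_body L b) ` {b. (p,b) \<in> P}" using vSup_T u TP_eq by metis
        then obtain b where b: "(p,b) \<in> P" "eval_body L b = T a" by auto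
        obtain N where "sqle a (eval_body L b) (eval_body (Is N) b)" using stb by blast
        then have "eval_body (Is N) b = T a" using b sqle_Ta by metis
        moreover have "eval_body (Is N) b \<in> (\<lambda>b. eval_body (Is N) b) ` {b. (p,b) \<in> P}" using b by blast
        ultimately have "vle (T a) (TP P (Is N) p)" unfolding TP_eq by (metis vSup_upper)
        moreover have "vle (TP P (Is N) p) (T a)"
        proof -
          have "sqle a (TP P (Is N) p) (T a)" using ub u by metis
          then have "TP P (Is N) p = T a \<or> ord_ge (TP P (Is N) p) a" by (auto simp: sqle_def)
          then show ?thesis using ord_ge_iff vle_refl by metis
        qed
        ultimately show ?thesis using vle_antisym by blast
      qed
      show "TP P L p = F a" if allF: "\<forall>n. TP P (Is n) p = F a"
      proof -
        have ureg: "ord_ge (TP P L p) a" using ub allF sqle_reg1[of "F a" a] by simp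
        have "vle (TP P L p) (F a)" unfolding TP_eq
        proof (rule vSup_least, safe)
          fix b assume b: "(p,b) \<in> P"
          obtain N where N: "sqle a (eval_body L b) (eval_body (Is N) b)" using stb by blast
          have le: "vle (eval_body (Is n) b) (F a)" for n
          proof -
            have "eval_body (Is n) b \<in> (\<lambda>b. eval_body (Is n) b) ` {b. (p,b) \<in> P}" using b by blast
            then have "vle (eval_body (Is n) b) (TP P (Is n) p)" unfolding TP_eq by (rule vSup_upper)
            then show ?thesis using allF by simp
          qed
          show "vle (eval_body L b) (F a)"
          proof (cases "ord_ge (eval_body L b) a")
            case True
            then have "ord_ge (eval_body (Is N) b) a" using N sqle_reg1 by blast
            then have "eval_body (Is N) b = F a" using le ord_ge_iff vle_antisym by blast
            then have "eval_body L b = F a" using N sqle_Fa by metis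
            then show ?thesis by (simp add: vle_refl)
          next
            case False
            have "sqle a (eval_body (Is 0) b) (eval_body L b)"
              by (rule eval_mono[OF nomax]) (use ubI[of 0] in \<open>simp add: sqleI_def\<close>)
            then have "eval_body L b = eval_body (Is 0) b" using sqle_small2[OF False] by metis
            then show ?thesis using le by metis
          qed
        qed
        then show ?thesis using ureg ord_ge_iff vle_antisym by blast
      qed
    qed
    have R: "vlubI a (TP P (Is 0)) (range (\<lambda>n. TP P (Is n))) p = vlub a (TP P (Is 0) p) (range (\<lambda>n. TP P (Is n) p))" for p
      unfolding vlubI_def by (simp add: image_image)
    show ?thesis unfolding L_def[symmetric] sqeqI_def sqleI_def R using main by (auto simp: sqeq_def)
  qed
  show ?thesis unfolding alpha_continuous_def using mono cont by blast
qed

end
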